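(* Let $G=(V,E)$ be a graph and $v\in V$. Then $F_v=\emptyset$ if and only if $(e,e')\in\mathfrak d_v^*$ for all edges $e,e'\in E_v$. Moreover, if $F_v\neq\emptyset$, then $|F_v|\geq 2$.
   Context: All graphs are finite, simple and undirected. For a graph $G=(V,E)$ and $v\in V$, $E_v$ denotes the set of edges incident to $v$. For two distinct adjacent edges $e=(v,u)$, $f=(v,w)$, a square spanned by $e$ and $f$ is a $4$-cycle $v,u,x,w,v$ in $G$ with $x\notin\{v,u,w\}$; $x$ is its top vertex. The square is chordless if neither $(u,w)$ nor $(v,x)$ is an edge of $G$. In a chordless square $v,u,x,w$, the edge $(x,w)$ is the opposite edge of $(v,u)$ and $(x,u)$ is the opposite edge of $(v,w)$ (and vice versa). The relation $\delta(G)\subseteq E\times E$: $(e,f)\in\delta(G)$ iff (i) $e,f$ are distinct adjacent edges and it is not the case that $e$ and $f$ span exactly one square and that square is chordless; or (ii) $e$ and $f$ are opposite edges of a chordless square; or (iii) $e=f$. For a reflexive symmetric relation $R$ on a set, $R^*$ denotes its transitive closure, i.e. the finest equivalence relation containing $R$. Define $\mathfrak d_v=((E_v\times E)\cup(E\times E_v))\cap\delta(G)$, and $\mathfrak d_v^*$ the finest equivalence relation on $E$ containing $\mathfrak d_v$. Let $F_v\subseteq E\setminus E_v$ be the set of edges that are the edges not incident to $v$ of some chordless square spanned by two edges $e,e'\in E_v$ with $(e,e')\notin\mathfrak d_v^*$. *)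

theory Defs
  imports Main
begin

definition graph :: "'a set \<Rightarrow> 'a set set \<Rightarrow> bool" where
  "graph V E \<longleftrightarrow> finite V \<and> (\<forall>e\<in>E. \<exists>u w. u \<noteq> w \<and> u \<in> V \<and> w \<in> V \<and> e = {u, w})"

definition inc_edges :: "'a set set \<Rightarrow> 'a \<Rightarrow> 'a set set" where
  "inc_edges E v = {e\<in>E. v \<in> e}"

definition sq_tops :: "'a set set \<Rightarrow> 'a set \<Rightarrow> 'a set \<Rightarrow> 'a set" where
  "sq_tops E e f = {x. \<exists>v u w. e = {v, u} \<and> f = {v, w} \<and> distinct [v, u, w] \<and>
      x \<notin> {v, u, w} \<and> {u, x} \<in> E \<and> {x, w} \<in> E}"

definition single_chordless :: "'a set set \<Rightarrow> 'a set \<Rightarrow> 'a set \<Rightarrow> bool" where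
  "single_chordless E e f \<longleftrightarrow> (\<exists>v u w x. e = {v, u} \<and> f = {v, w} \<and> distinct [v, u, w] \<and>
      sq_tops E e f = {x} \<and> {u, w} \<notin> E \<and> {v, x} \<notin> E)"

definition opposite :: "'a set set \<Rightarrow> 'a set \<Rightarrow> 'a set \<Rightarrow> bool" where
  "opposite E e f \<longleftrightarrow> (\<exists>a b c d. distinct [a, b, c, d] \<and> e = {a, b} \<and> f = {c, d} \<and>
      {a, b} \<in> E \<and> {b, c} \<in> E \<and> {c, d} \<in> E \<and> {d, a} \<in> E \<and>
      {a, c} \<notin> E \<and> {b, d} \<notin> E)"

definition delta :: "'a set set \<Rightarrow> ('a set \<times> 'a set) set" where
  "delta E = {(e, f). e \<in> E \<and> f \<in> E \<and>
      ((e \<noteq> f \<and> e \<inter> f \<noteq> {} \<and> \<not> single_chordless E e f) \<or> opposite E e f \<or> e = f)}"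

definition delta_v :: "'a set set \<Rightarrow> 'a \<Rightarrow> ('a set \<times> 'a set) set" where
  "delta_v E v = ((inc_edges E v \<times> E) \<union> (E \<times> inc_edges E v)) \<inter> delta E"

definition delta_v_star :: "'a set set \<Rightarrow> 'a \<Rightarrow> ('a set \<times> 'a set) set" where
  "delta_v_star E v = \<Inter>{R. equiv E R \<and> delta_v E v \<subseteq> R}"

definition F_v :: "'a set set \<Rightarrow> 'a \<Rightarrow> 'a set set" where
  "F_v E v = {g. \<exists>e e' u w x. e \<in> inc_edges E v \<and> e' \<in> inc_edges E v \<and>
      (e, e') \<notin> delta_v_star E v \<and>
      e = {v, u} \<and> e' = {v, w} \<and> distinct [v, u, w] \<and> x \<notin> {v, u, w} \<and>
      {u, x} \<in> E \<and> {x, w} \<in> E \<and> {u, w} \<notin> E \<and> {v, x} \<notin> E \<and>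
      (g = {u, x} \<or> g = {x, w})}"

end

theory Submission
  imports Defs
begin

lemma pair_uniq:
  assumes "distinct [v, u, w]" "distinct [v', u', w']"
    "{v, u} = {v', u'}" "{v, w} = {v', w'}"
  shows "v = v' \<and> u = u' \<and> w = w'"
  using assms by (auto simp: doubleton_eq_iff)

lemma delta_sub: "delta_v E v \<subseteq> delta_v_star E v"
  unfolding delta_v_star_def by blast

lemma star_equiv:
  "equiv E (delta_v_star E v)"
proof -
  have ne: "E \<times> E \<in> {R. equiv E R \<and> delta_v E v \<subseteq> R}"
    by (auto simp: equiv_def refl_on_def sym_def trans_def delta_v_def delta_def)
  have r: "refl_on E (delta_v_star E v)"
    using ne unfolding delta_v_star_def refl_on_def equiv_def by blast
  have s: "sym (delta_v_star E v)"
    unfolding delta_v_star_def sym_def equiv_def by blast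
  have t: "trans (delta_v_star E v)"
    unfolding delta_v_star_def trans_def equiv_def by blast
  have f: "delta_v_star E v \<subseteq> E \<times> E"
    using ne unfolding delta_v_star_def by blast
  show ?thesis using r s t f by (simp add: equiv_def)
qed

lemma Fv_elim:
  assumes g: "g \<in> F_v E v"
  obtains e e' u w x where "e \<in> inc_edges E v" "e' \<in> inc_edges E v"
      "(e, e') \<notin> delta_v_star E v"
      "e = {v, u}" "e' = {v, w}" "distinct [v, u, w]" "x \<notin> {v, u, w}"
      "{u, x} \<in> E" "{x, w} \<in> E" "{u, w} \<notin> E" "{v, x} \<notin> E"
proof -
  from g obtain e e' u w x where "e \<in> inc_edges E v \<and> e' \<in> inc_edges E v \<and>
      (e, e') \<notin> delta_v_star E v \<and>
      e = {v, u} \<and> e' = {v, w} \<and> distinct [v, u, w] \<and> x \<notin> {v, u, w} \<and>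
      {u, x} \<in> E \<and> {x, w} \<in> E \<and> {u, w} \<notin> E \<and> {v, x} \<notin> E"
    unfolding F_v_def by blast
  thus ?thesis using that by blast
qed

lemma Fv_sub: "F_v E v \<subseteq> E"
  unfolding F_v_def by auto
lemma finE: "graph V E \<Longrightarrow> finite E"
proof -
  assume a: "graph V E"
  have "E \<subseteq> Pow V" using a unfolding graph_def by auto
  moreover have "finite V" using a unfolding graph_def by blast
  ultimately show ?thesis by (meson finite_Pow_iff finite_subset)
qed

lemma Fv_intro:
  assumes "e \<in> inc_edges E v" "e' \<in> inc_edges E v"
      "(e, e') \<notin> delta_v_star E v"
      "e = {v, u}" "e' = {v, w}" "distinct [v, u, w]" "x \<notin> {v, u, w}"
      "{u, x} \<in> E" "{x, w} \<in> E" "{u, w} \<notin> E" "{v, x} \<notin> E"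
  shows "{u, x} \<in> F_v E v" "{x, w} \<in> F_v E v"
  unfolding F_v_def mem_Collect_eq
  by (rule exI[of _ e], rule exI[of _ e'], rule exI[of _ u], rule exI[of _ w], rule exI[of _ x],
      intro conjI, (rule assms)+, simp)+
lemma ne: "distinct [v, u, w] \<Longrightarrow> x \<notin> {v, u, w} \<Longrightarrow> {u, x} \<noteq> {x, w}"
  by (auto simp: doubleton_eq_iff)

lemma part3:
  assumes "graph V E" and ne0: "F_v E v \<noteq> {}"
  shows "card (F_v E v) \<ge> 2"
proof -
  from ne0 obtain g where g: "g \<in> F_v E v" by blast
  obtain e e' u w x where h: "e \<in> inc_edges E v" "e' \<in> inc_edges E v"
      "(e, e') \<notin> delta_v_star E v"
      "e = {v, u}" "e' = {v, w}" "distinct [v, u, w]" "x \<notin> {v, u, w}"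
      "{u, x} \<in> E" "{x, w} \<in> E" "{u, w} \<notin> E" "{v, x} \<notin> E"
    by (rule Fv_elim[OF g])
  note ins = Fv_intro[OF h]
  have n: "{u, x} \<noteq> {x, w}" using ne[OF h(6,7)] .
  have fin: "finite (F_v E v)" by (rule finite_subset[OF Fv_sub finE[OF assms(1)]])
  have c2: "card {{u, x}, {x, w}} = 2" using n by simp
  have "{{u, x}, {x, w}} \<subseteq> F_v E v" using ins by simp
  hence "card {{u, x}, {x, w}} \<le> card (F_v E v)" by (rule card_mono[OF fin])
  thus ?thesis using c2 by simp
qed
lemma part2:
  assumes "graph V E" and F0: "F_v E v = {}"
  shows "\<forall>e\<in>inc_edges E v. \<forall>e'\<in>inc_edges E v. (e, e') \<in> delta_v_star E v"
proof (intro ballI, rule ccontr)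
  fix e e' assume ei: "e \<in> inc_edges E v" and e'i: "e' \<in> inc_edges E v"
    and nr: "(e, e') \<notin> delta_v_star E v"
  have eE: "e \<in> E" "e' \<in> E" "v \<in> e" "v \<in> e'" using ei e'i by (auto simp: inc_edges_def)
  obtain a b where ab: "a \<noteq> b" "e = {a, b}" using assms(1) eE(1) unfolding graph_def by blast
  obtain u where u: "e = {v, u}" "u \<noteq> v" using ab eE(3) by auto
  obtain a b where ab: "a \<noteq> b" "e' = {a, b}" using assms(1) eE(2) unfolding graph_def by blast
  obtain w where w: "e' = {v, w}" "w \<noteq> v" using ab eE(4) by auto
  have refl: "(e, e) \<in> delta_v_star E v"
    using star_equiv[of E v] eE(1) unfolding equiv_def by (blast intro: refl_onD)
  have "e \<noteq> e'" using refl nr by auto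
  hence uw: "u \<noteq> w" using u w by auto
  have dist: "distinct [v, u, w]" using u w uw by auto
  have nd: "(e, e') \<notin> delta_v E v" using contra_subsetD[OF delta_sub nr] .
  have "\<not> single_chordless E e e' \<Longrightarrow> (e, e') \<in> delta_v E v"
    using ei eE \<open>e \<noteq> e'\<close> by (auto simp: delta_v_def delta_def)
  hence sc: "single_chordless E e e'" using nd by blast
  then obtain v' u' w' x where sc1: "e = {v', u'}" "e' = {v', w'}" "distinct [v', u', w']"
    "sq_tops E e e' = {x}" "{u', w'} \<notin> E" "{v', x} \<notin> E"
    unfolding single_chordless_def by blast
  have eq: "v' = v \<and> u' = u \<and> w' = w" using pair_uniq[OF dist sc1(3)] u(1) w(1) sc1(1,2) by simp
  have "x \<in> sq_tops E e e'" using sc1 by auto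
  then obtain v'' u'' w'' where t: "e = {v'', u''}" "e' = {v'', w''}" "distinct [v'', u'', w'']"
    "x \<notin> {v'', u'', w''}" "{u'', x} \<in> E" "{x, w''} \<in> E"
    unfolding sq_tops_def by blast
  have eq2: "v'' = v \<and> u'' = u \<and> w'' = w" using pair_uniq[OF dist t(3)] u(1) w(1) t(1,2) by simp
  have q1: "{u, x} \<in> E" "{x, w} \<in> E" "x \<notin> {v, u, w}" using t eq2 by auto
  have q2: "{u, w} \<notin> E" "{v, x} \<notin> E" using sc1 eq by auto
  have "{u, x} \<in> F_v E v"
    using Fv_intro(1)[OF ei e'i nr u(1) w(1) dist q1(3) q1(1) q1(2) q2] .
  thus False using F0 by blast
qed


theorem lemma3p1:
  fixes V :: "'a set" and E :: "'a set set" and v :: 'a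
  assumes "graph V E" and "v \<in> V"
  shows "(F_v E v = {} \<longleftrightarrow> (\<forall>e\<in>inc_edges E v. \<forall>e'\<in>inc_edges E v. (e, e') \<in> delta_v_star E v))
         \<and> (F_v E v \<noteq> {} \<longrightarrow> card (F_v E v) \<ge> 2)"
proof (intro conjI impI iffI)
  show "\<forall>e\<in>inc_edges E v. \<forall>e'\<in>inc_edges E v. (e, e') \<in> delta_v_star E v \<Longrightarrow> F_v E v = {}"
    unfolding F_v_def by blast
next
  show "F_v E v = {} \<Longrightarrow> \<forall>e\<in>inc_edges E v. \<forall>e'\<in>inc_edges E v. (e, e') \<in> delta_v_star E v"
    using part2[OF assms(1)] by blast
next
  show "F_v E v \<noteq> {} \<Longrightarrow> card (F_v E v) \<ge> 2"
    using part3[OF assms(1)] by blast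
qed

end
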